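(* Let $\|\cdot\|$ be a norm on $\mathbf{R}^p$ with dual norm $\|\cdot\|_*$, let $0\le v\le 1$, $M_v>0$, and let $g_0,\dots,g_T:\mathbf{R}^p\to\mathbf{R}$ be convex functions such that each $g_t$ has H\"older continuous (sub)gradients of degree $v$ with constant $M_v(g_t)<M_v$, i.e. $\|\nabla g_t(x)-\nabla g_t(y)\|_*\le M_v(g_t)\|x-y\|^v$ for all $x,y$. Let $h$ be a simple convex function and set $f_{g_t}(x)=g_t(x)+h(x)$. Let $x^*$ be a solution of $\min_x \frac{1}{T+1}\sum_{t=0}^T g_t(x)+h(x)$. Let the sequence $\{x_t\}$ and the numbers $L_t$ be generated by the general O-UPGM described in the context (with inputs $L_0>0$, $\epsilon>0$, starting point $x_0$). Then $$\sum_{t=0}^{T}\frac{1}{L_{t+1}}\bigl[f_{g_t}(x_{t+1})-f_{g_t}(x^* )\bigr]\le \frac{\epsilon}{2}S_T+2r_0(x^* ),$$ where $S_T=\sum_{t=1}^{T+1}\frac{1}{L_t}$ and $r_0(y)=\xi(x_0,y)$.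
   Context: A prox-function $d:\mathbf{R}^p\to\mathbf{R}$ is differentiable, strongly convex with convexity parameter $1$ with respect to $\|\cdot\|$, and has minimum value $0$. The Bregman distance is $\xi(x,y)=d(y)-d(x)-\langle\nabla d(x),y-x\rangle$. $\nabla g$ denotes a gradient, or any subgradient when $g$ is nonsmooth. For $M>0$ and a function $g$, the Bregman mapping is $\mathfrak{B}_{M,g}(x)=\arg\min_y\bigl[g(x)+\langle\nabla g(x),y-x\rangle+M\xi(y,x)+h(y)\bigr]$. General O-UPGM: given $L_0>0$, $\epsilon>0$ and $x_0$, for $t=0,1,\dots,T$: find the smallest integer $i_t\ge 0$ such that $\hat x=\mathfrak{B}_{2^{i_t}L_t,g_t}(x_t)$ satisfies $g_t(\hat x)+h(\hat x)\le g_t(x_t)+\langle\nabla g_t(x_t),\hat x-x_t\rangle+2^{i_t}L_t\xi(\hat x,x_t)+h(\hat x)+\frac{\epsilon}{2}$; then set $x_{t+1}=\hat x$ and $L_{t+1}=2^{i_t-1}L_t$. The output is $\bar x=\frac{1}{S_T}\sum_{t=1}^{T+1}\frac{1}{L_t}x_t$. *)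

theory Defs
  imports "HOL-Analysis.Analysis"
begin

definition is_norm :: "(real^'n \<Rightarrow> real) \<Rightarrow> bool" where
  "is_norm N \<longleftrightarrow> (\<forall>x. N x = 0 \<longleftrightarrow> x = 0) \<and> (\<forall>c x. N (c *\<^sub>R x) = \<bar>c\<bar> * N x)
     \<and> (\<forall>x y. N (x + y) \<le> N x + N y)"

definition dual_norm :: "(real^'n \<Rightarrow> real) \<Rightarrow> real^'n \<Rightarrow> real" where
  "dual_norm N s = (SUP x\<in>{x. N x \<le> 1}. s \<bullet> x)"

definition strongly_convex_wrt :: "(real^'n \<Rightarrow> real) \<Rightarrow> real \<Rightarrow> (real^'n \<Rightarrow> real) \<Rightarrow> bool" where
  "strongly_convex_wrt N mu d \<longleftrightarrow> (\<forall>x y a. 0 \<le> a \<and> a \<le> 1 \<longrightarrow>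
      d (a *\<^sub>R x + (1 - a) *\<^sub>R y) \<le> a * d x + (1 - a) * d y - mu / 2 * a * (1 - a) * (N (x - y))\<^sup>2)"

definition prox_function :: "(real^'n \<Rightarrow> real) \<Rightarrow> (real^'n \<Rightarrow> real) \<Rightarrow> (real^'n \<Rightarrow> real^'n) \<Rightarrow> bool" where
  "prox_function N d gd \<longleftrightarrow> (\<forall>x. (d has_derivative (\<lambda>u. gd x \<bullet> u)) (at x))
     \<and> strongly_convex_wrt N 1 d \<and> (\<forall>x. 0 \<le> d x) \<and> (\<exists>x. d x = 0)"

definition bregman :: "(real^'n \<Rightarrow> real) \<Rightarrow> (real^'n \<Rightarrow> real^'n) \<Rightarrow> real^'n \<Rightarrow> real^'n \<Rightarrow> real" where
  "bregman d gd x y = d y - d x - gd x \<bullet> (y - x)"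

definition is_subgradient :: "(real^'n \<Rightarrow> real) \<Rightarrow> real^'n \<Rightarrow> real^'n \<Rightarrow> bool" where
  "is_subgradient g x s \<longleftrightarrow> (\<forall>y. g x + s \<bullet> (y - x) \<le> g y)"

text \<open>Bregman mapping B_{M,g}(x); G is the (sub)gradient selection of g.
  The prox-term is M xi(x,y) with prox-center x.\<close>
definition bregman_map ::
  "(real^'n \<Rightarrow> real) \<Rightarrow> (real^'n \<Rightarrow> real^'n) \<Rightarrow> (real^'n \<Rightarrow> real) \<Rightarrow>
   (real^'n \<Rightarrow> real) \<Rightarrow> (real^'n \<Rightarrow> real^'n) \<Rightarrow> real \<Rightarrow> real^'n \<Rightarrow> real^'n" where
  "bregman_map d gd h g G M x =
     arg_min (\<lambda>y. g x + G x \<bullet> (y - x) + M * bregman d gd x y + h y) (\<lambda>_. True)"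

definition ls_ok ::
  "(real^'n \<Rightarrow> real) \<Rightarrow> (real^'n \<Rightarrow> real^'n) \<Rightarrow> (real^'n \<Rightarrow> real) \<Rightarrow>
   (real^'n \<Rightarrow> real) \<Rightarrow> (real^'n \<Rightarrow> real^'n) \<Rightarrow> real \<Rightarrow> real \<Rightarrow> real^'n \<Rightarrow> nat \<Rightarrow> bool" where
  "ls_ok d gd h g G eps Lt xt j \<longleftrightarrow>
     (let xh = bregman_map d gd h g G (2 ^ j * Lt) xt in
      g xh + h xh \<le> g xt + G xt \<bullet> (xh - xt) + 2 ^ j * Lt * bregman d gd xt xh + h xh + eps / 2)"

definition oupgm ::
  "(real^'n \<Rightarrow> real) \<Rightarrow> (real^'n \<Rightarrow> real^'n) \<Rightarrow> (real^'n \<Rightarrow> real) \<Rightarrow>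
   (nat \<Rightarrow> real^'n \<Rightarrow> real) \<Rightarrow> (nat \<Rightarrow> real^'n \<Rightarrow> real^'n) \<Rightarrow> real \<Rightarrow> real \<Rightarrow> real^'n \<Rightarrow> nat \<Rightarrow>
   (nat \<Rightarrow> real^'n) \<Rightarrow> (nat \<Rightarrow> real) \<Rightarrow> (nat \<Rightarrow> nat) \<Rightarrow> bool" where
  "oupgm d gd h g G L0 eps x0 T x L i \<longleftrightarrow>
     x 0 = x0 \<and> L 0 = L0 \<and>
     (\<forall>t\<le>T.
        ls_ok d gd h (g t) (G t) eps (L t) (x t) (i t) \<and>
        (\<forall>j<i t. \<not> ls_ok d gd h (g t) (G t) eps (L t) (x t) j) \<and>
        x (Suc t) = bregman_map d gd h (g t) (G t) (2 ^ i t * L t) (x t) \<and>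
        L (Suc t) = 2 ^ i t * L t / 2)"

end

theory Submission
  imports Defs
begin

lemma dir_deriv:
  fixes d :: "real^'n \<Rightarrow> real"
  assumes "(d has_derivative (\<lambda>u. D \<bullet> u)) (at x)"
  shows "((\<lambda>a. (d (x + a *\<^sub>R w) - d x) / a) \<longlongrightarrow> D \<bullet> w) (at_right 0)"
proof -
  have l: "((\<lambda>a::real. x + a *\<^sub>R w) has_derivative (\<lambda>a. a *\<^sub>R w)) (at 0)"
    by (auto intro!: derivative_eq_intros)
  have "((d \<circ> (\<lambda>a::real. x + a *\<^sub>R w)) has_derivative ((\<lambda>u. D \<bullet> u) \<circ> (\<lambda>a. a *\<^sub>R w))) (at 0)"
    using diff_chain_at[OF l] assms by simp
  moreover have e: "((\<lambda>u. D \<bullet> u) \<circ> (\<lambda>a. a *\<^sub>R w)) = (*) (D \<bullet> w)"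
    by (auto simp: fun_eq_iff)
  ultimately have "((\<lambda>a. d (x + a *\<^sub>R w)) has_real_derivative (D \<bullet> w)) (at 0)"
    by (simp add: has_field_derivative_def o_def)
  hence "((\<lambda>a. (d (x + a *\<^sub>R w) - d x) / a) \<longlongrightarrow> D \<bullet> w) (at 0)"
    by (simp add: DERIV_def)
  thus ?thesis by (rule tendsto_mono[OF at_le, rotated]) simp
qed

lemma lim_lb:
  fixes f :: "real \<Rightarrow> real"
  assumes "(f \<longlongrightarrow> l) (at_right 0)" "\<And>a. 0 < a \<Longrightarrow> a \<le> 1 \<Longrightarrow> c \<le> f a"
  shows "c \<le> l"
proof (rule tendsto_lowerbound[OF assms(1)])
  show "\<forall>\<^sub>F a in at_right 0. c \<le> f a"
    unfolding eventually_at_right[of 0 "1::real", simplified]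
    using assms(2) by (intro exI[of _ 1]) auto
qed simp

lemma lim_ub:
  fixes f :: "real \<Rightarrow> real"
  assumes "(f \<longlongrightarrow> l) (at_right 0)" "\<And>a. 0 < a \<Longrightarrow> a \<le> 1 \<Longrightarrow> f a \<le> c"
  shows "l \<le> c"
proof (rule tendsto_upperbound[OF assms(1)])
  show "\<forall>\<^sub>F a in at_right 0. f a \<le> c"
    unfolding eventually_at_right[of 0 "1::real", simplified]
    using assms(2) by (intro exI[of _ 1]) auto
qed simp

lemma N_basic:
  assumes "is_norm N"
  shows "N 0 = 0" "N (- x) = N x" "N x \<ge> 0" "N (c *\<^sub>R x) = \<bar>c\<bar> * N x" "N (x + y) \<le> N x + N y"
proof -
  show z: "N 0 = 0" using assms unfolding is_norm_def by blast
  show s: "N (c *\<^sub>R x) = \<bar>c\<bar> * N x" "N (x + y) \<le> N x + N y" using assms unfolding is_norm_def by blast+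
  show m: "N (- x) = N x" using assms unfolding is_norm_def by (metis abs_minus_cancel abs_one mult_1 scaleR_minus1_left)
  have "N (x + - x) \<le> N x + N (- x)" using assms unfolding is_norm_def by blast
  thus "N x \<ge> 0" using z m by simp
qed

lemma N_sum:
  assumes "is_norm N" "finite S"
  shows "N (sum f S) \<le> (\<Sum>i\<in>S. N (f i))"
  using assms(2)
proof (induction S rule: finite_induct)
  case empty then show ?case using N_basic[OF assms(1)] by simp
next
  case (insert a S)
  then show ?case using N_basic(5)[OF assms(1), of "f a" "sum f S"] by simp
qed

lemma N_bound:
  fixes N :: "real^'n \<Rightarrow> real"
  assumes "is_norm N"
  shows "N x \<le> norm x * (\<Sum>b\<in>Basis. N b)"
proof -
  have "N x = N (\<Sum>b\<in>Basis. (x \<bullet> b) *\<^sub>R b)" by (simp add: euclidean_representation)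
  also have "\<dots> \<le> (\<Sum>b\<in>Basis. N ((x \<bullet> b) *\<^sub>R b))" by (rule N_sum[OF assms]) simp
  also have "\<dots> = (\<Sum>b\<in>Basis. \<bar>x \<bullet> b\<bar> * N b)" using N_basic(4)[OF assms] by simp
  also have "\<dots> \<le> (\<Sum>b\<in>Basis. norm x * N b)"
    by (rule sum_mono, rule mult_right_mono) (auto simp: Basis_le_norm N_basic(3)[OF assms])
  finally show ?thesis by (simp add: sum_distrib_left)
qed

lemma N_cont:
  fixes N :: "real^'n \<Rightarrow> real"
  assumes "is_norm N"
  shows "continuous_on UNIV N"
proof (rule lipschitz_on_continuous_on)
  let ?C = "\<Sum>b\<in>Basis. N (b::real^'n)"
  show "?C-lipschitz_on UNIV N"
  proof (rule lipschitz_onI)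
    fix x y :: "real^'n"
    have "N x \<le> N y + N (x - y)" using N_basic(5)[OF assms, of y "x - y"] by simp
    moreover have "N y \<le> N x + N (y - x)" using N_basic(5)[OF assms, of x "y - x"] by simp
    moreover have "N (y - x) = N (x - y)" using N_basic(2)[OF assms, of "x - y"] by simp
    moreover have "N (x - y) \<le> norm (x - y) * ?C" by (rule N_bound[OF assms])
    ultimately show "dist (N x) (N y) \<le> ?C * dist x y"
      by (simp add: dist_real_def dist_norm abs_le_iff mult.commute)
  next
    show "0 \<le> ?C" using N_basic(3)[OF assms] by (simp add: sum_nonneg)
  qed
qed

lemma N_lower:
  fixes N :: "real^'n \<Rightarrow> real"
  assumes "is_norm N"
  shows "\<exists>c>0. \<forall>y. c * norm y \<le> N y"
proof -
  have "sphere (0::real^'n) 1 \<noteq> {}" by simp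
  then obtain u where u: "u \<in> sphere (0::real^'n) 1" "\<forall>w\<in>sphere 0 1. N u \<le> N w"
    using continuous_attains_inf[OF compact_sphere _ continuous_on_subset[OF N_cont[OF assms]]] by blast
  have "u \<noteq> 0" using u by auto
  hence pos: "N u > 0" using assms N_basic(3)[OF assms, of u] unfolding is_norm_def by force
  show ?thesis
  proof (intro exI conjI allI)
    show "N u > 0" by fact
    fix y :: "real^'n"
    show "N u * norm y \<le> N y"
    proof (cases "y = 0")
      case True then show ?thesis using N_basic(1)[OF assms] by simp
    next
      case False
      let ?w = "(1 / norm y) *\<^sub>R y"
      have "?w \<in> sphere 0 1" using False by simp
      hence "N u \<le> N ?w" using u by blast
      also have "\<dots> = N y / norm y" using N_basic(4)[OF assms] by simp
      finally show ?thesis using False by (simp add: field_simps)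
    qed
  qed
qed

lemma exists_min:
  fixes F :: "real^'n \<Rightarrow> real" and N :: "real^'n \<Rightarrow> real"
  assumes nrm: "is_norm N" and cont: "continuous_on UNIV F" and mu: "\<mu> > 0"
    and sc: "\<And>x y a. 0 \<le> a \<Longrightarrow> a \<le> 1 \<Longrightarrow>
       F (a *\<^sub>R x + (1 - a) *\<^sub>R y) \<le> a * F x + (1 - a) * F y - \<mu> / 2 * a * (1 - a) * (N (x - y))\<^sup>2"
  shows "\<exists>z. \<forall>y. F z \<le> F y"
proof -
  obtain c where c: "c > 0" "\<And>y. c * norm y \<le> N y" using N_lower[OF nrm] by blast
  have "sphere (0::real^'n) 1 \<noteq> {}" by simp
  then obtain w0 where w0: "w0 \<in> sphere (0::real^'n) 1" "\<forall>w\<in>sphere 0 1. F w0 \<le> F w"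
    using continuous_attains_inf[OF compact_sphere _ continuous_on_subset[OF cont]] by blast
  define m where "m = F w0"
  define R0 where "R0 = 1 + max 0 (2 * (F 0 - m) / (\<mu> * c^2))"
  have "cball (0::real^'n) R0 \<noteq> {}" unfolding R0_def by simp
  then obtain z where z: "z \<in> cball (0::real^'n) R0" "\<forall>y\<in>cball 0 R0. F z \<le> F y"
    using continuous_attains_inf[OF compact_cball _ continuous_on_subset[OF cont]] by blast
  have Fz0: "F z \<le> F 0" using z unfolding R0_def by simp
  show ?thesis
  proof (intro exI allI)
    fix y :: "real^'n"
    show "F z \<le> F y"
    proof (cases "norm y \<le> R0")
      case True then show ?thesis using z by simp
    next
      case False
      define R where "R = norm y"
      define a where "a = 1 / R"
      have R1: "R > 1" "R > R0" using False unfolding R_def R0_def by auto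
      have a01: "0 < a" "a < 1" using R1 unfolding a_def by auto
      have "a *\<^sub>R y \<in> sphere 0 1" proof -
        have "y \<noteq> 0" using R1 unfolding R_def by auto
        thus ?thesis unfolding a_def R_def by simp
      qed
      hence m: "m \<le> F (a *\<^sub>R y)" using w0 unfolding m_def by blast
      have "F (a *\<^sub>R y + (1 - a) *\<^sub>R 0) \<le> a * F y + (1 - a) * F 0 - \<mu> / 2 * a * (1 - a) * (N (y - 0))\<^sup>2"
        using sc[of a y 0] a01 by simp
      hence i1: "m \<le> a * F y + (1 - a) * F 0 - \<mu> / 2 * a * (1 - a) * (N y)\<^sup>2" using m by simp
      have "c * R \<le> N y" using c(2)[of y] unfolding R_def .
      hence "(c * R)^2 \<le> (N y)^2" using c R1 by (intro power_mono) auto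
      hence "\<mu> / 2 * a * (1 - a) * (c * R)^2 \<le> \<mu> / 2 * a * (1 - a) * (N y)\<^sup>2"
        using mu a01 by (intro mult_left_mono) auto
      moreover have "\<mu> / 2 * a * (1 - a) * (c * R)^2 = \<mu> / 2 * c^2 * (R - 1)"
        using R1 unfolding a_def by (simp add: field_simps power2_eq_square)
      ultimately have i2: "m \<le> a * F y + (1 - a) * F 0 - \<mu> / 2 * c^2 * (R - 1)" using i1 by linarith
      have "2 * (F 0 - m) / (\<mu> * c^2) \<le> R - 1" using R1 unfolding R0_def by linarith
      hence "2 * (F 0 - m) \<le> (R - 1) * (\<mu> * c^2)" using mu c by (simp add: pos_divide_le_eq)
      hence "F 0 - m \<le> \<mu> / 2 * c^2 * (R - 1)" by (simp add: algebra_simps)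
      moreover have "(1 - a) * F 0 = F 0 - a * F 0" by (simp add: algebra_simps)
      ultimately have "a * F 0 \<le> a * F y" using i2 by linarith
      hence "F 0 \<le> F y" using a01 by simp
      thus ?thesis using Fz0 by simp
    qed
  qed
qed

lemma bregman_nonneg:
  assumes prox: "prox_function N d gd"
  shows "bregman d gd x y \<ge> 0"
proof -
  have der: "(d has_derivative (\<lambda>u. gd x \<bullet> u)) (at x)" and sc: "strongly_convex_wrt N 1 d"
    using prox unfolding prox_function_def by blast+
  have "gd x \<bullet> (y - x) \<le> d y - d x"
  proof (rule lim_ub[OF dir_deriv[OF der]])
    fix a :: real assume a: "0 < a" "a \<le> 1"
    have "d (a *\<^sub>R y + (1 - a) *\<^sub>R x) \<le> a * d y + (1 - a) * d x - 1 / 2 * a * (1 - a) * (N (y - x))\<^sup>2"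
      using sc a unfolding strongly_convex_wrt_def by auto
    moreover have "1 / 2 * a * (1 - a) * (N (y - x))\<^sup>2 \<ge> 0" using a by simp
    moreover have "x + a *\<^sub>R (y - x) = a *\<^sub>R y + (1 - a) *\<^sub>R x" by (simp add: algebra_simps)
    ultimately have "d (x + a *\<^sub>R (y - x)) \<le> a * d y + (1 - a) * d x" by (metis (no_types, lifting) diff_ge_0_iff_ge order_trans diff_le_eq le_add_same_cancel1)
    hence "d (x + a *\<^sub>R (y - x)) - d x \<le> a * (d y - d x)" by (simp add: algebra_simps)
    thus "(d (x + a *\<^sub>R (y - x)) - d x) / a \<le> d y - d x" using a by (simp add: divide_le_eq mult.commute)
  qed
  thus ?thesis unfolding bregman_def by simp
qed

lemma three_point:
  fixes N :: "real^'n \<Rightarrow> real"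
  assumes nrm: "is_norm N" and prox: "prox_function N d gd" and hc: "convex_on UNIV h"
    and M: "M > 0"
    and xp: "xp = bregman_map d gd h g G M x"
  shows "g x + G x \<bullet> (y - x) + M * bregman d gd x y + h y \<ge>
         g x + G x \<bullet> (xp - x) + M * bregman d gd x xp + h xp + M * bregman d gd xp y"
proof -
  define \<phi> where "\<phi> = (\<lambda>y. g x + G x \<bullet> (y - x) + M * bregman d gd x y + h y)"
  have der: "\<And>z. (d has_derivative (\<lambda>u. gd z \<bullet> u)) (at z)" and sc: "strongly_convex_wrt N 1 d"
    using prox unfolding prox_function_def by blast+
  have dcont: "continuous_on UNIV d"
    using der by (intro continuous_at_imp_continuous_on) (blast intro: has_derivative_continuous)
  have hcont: "continuous_on UNIV h" using convex_on_continuous[OF _ hc] by simp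
  have cont: "continuous_on UNIV \<phi>" unfolding \<phi>_def bregman_def
    by (intro continuous_intros dcont[THEN continuous_on_compose2[of UNIV]] hcont[THEN continuous_on_compose2[of UNIV]]) auto
  have hconv: "h (a *\<^sub>R u + (1 - a) *\<^sub>R v) \<le> a * h u + (1 - a) * h v" if "0 \<le> a" "a \<le> 1" for a u v
    using convex_onD[OF hc, of "1 - a" u v] that by simp
  have "\<exists>z. \<forall>y. \<phi> z \<le> \<phi> y"
  proof (rule exists_min[OF nrm cont M])
    fix u v :: "real^'n" and a :: real assume a: "0 \<le> a" "a \<le> 1"
    let ?p = "a *\<^sub>R u + (1 - a) *\<^sub>R v"
    have lin: "G x \<bullet> (?p - x) - M * (gd x \<bullet> (?p - x)) =
       a * (G x \<bullet> (u - x) - M * (gd x \<bullet> (u - x))) + (1 - a) * (G x \<bullet> (v - x) - M * (gd x \<bullet> (v - x)))"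
      by (simp add: inner_diff_right inner_add_right algebra_simps)
    have ds: "d ?p \<le> a * d u + (1 - a) * d v - 1 / 2 * a * (1 - a) * (N (u - v))\<^sup>2"
      using sc a unfolding strongly_convex_wrt_def by blast
    have hs: "h ?p \<le> a * h u + (1 - a) * h v" using hconv a by blast
    have "\<phi> ?p = g x + (G x \<bullet> (?p - x) - M * (gd x \<bullet> (?p - x))) + M * d ?p - M * d x + h ?p"
      unfolding \<phi>_def bregman_def by (simp add: algebra_simps)
    also have "\<dots> \<le> g x + (a * (G x \<bullet> (u - x) - M * (gd x \<bullet> (u - x))) + (1 - a) * (G x \<bullet> (v - x) - M * (gd x \<bullet> (v - x))))
        + M * (a * d u + (1 - a) * d v - 1 / 2 * a * (1 - a) * (N (u - v))\<^sup>2) - M * d x + (a * h u + (1 - a) * h v)"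
      unfolding lin using ds hs M by (intro add_mono diff_mono order_refl mult_left_mono) auto
    also have "\<dots> = a * \<phi> u + (1 - a) * \<phi> v - M / 2 * a * (1 - a) * (N (u - v))\<^sup>2"
      unfolding \<phi>_def bregman_def by (simp add: algebra_simps)
    finally show "\<phi> ?p \<le> a * \<phi> u + (1 - a) * \<phi> v - M / 2 * a * (1 - a) * (N (u - v))\<^sup>2" .
  qed
  hence "\<exists>z. is_arg_min \<phi> (\<lambda>_. True) z" unfolding is_arg_min_def by (auto simp: not_less)
  hence "is_arg_min \<phi> (\<lambda>_. True) xp"
    unfolding xp bregman_map_def arg_min_def \<phi>_def[symmetric] by (rule someI_ex)
  hence minp: "\<And>y. \<phi> xp \<le> \<phi> y" unfolding is_arg_min_def by (auto simp: not_less)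
  define w where "w = y - xp"
  have key: "- (G x \<bullet> w - M * (gd x \<bullet> w) + h y - h xp) \<le> M * (gd xp \<bullet> w)"
  proof (rule lim_lb[OF tendsto_mult_left[OF dir_deriv[OF der]]])
    fix a :: real assume a: "0 < a" "a \<le> 1"
    have e: "xp + a *\<^sub>R w = a *\<^sub>R y + (1 - a) *\<^sub>R xp" unfolding w_def by (simp add: algebra_simps)
    have hs: "h (xp + a *\<^sub>R w) \<le> a * h y + (1 - a) * h xp" unfolding e using hconv a by simp
    have "\<phi> xp \<le> \<phi> (xp + a *\<^sub>R w)" by (rule minp)
    hence "0 \<le> a * (G x \<bullet> w) + M * (d (xp + a *\<^sub>R w) - d xp) - a * M * (gd x \<bullet> w) + h (xp + a *\<^sub>R w) - h xp"
      unfolding \<phi>_def bregman_def by (simp add: inner_diff_right inner_add_right algebra_simps)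
    hence "0 \<le> a * (G x \<bullet> w) + M * (d (xp + a *\<^sub>R w) - d xp) - a * M * (gd x \<bullet> w) + a * (h y - h xp)"
      using hs by (simp add: algebra_simps)
    hence "a * (- (G x \<bullet> w - M * (gd x \<bullet> w) + h y - h xp)) \<le> M * (d (xp + a *\<^sub>R w) - d xp)"
      by (simp add: algebra_simps)
    thus "- (G x \<bullet> w - M * (gd x \<bullet> w) + h y - h xp) \<le> M * ((d (xp + a *\<^sub>R w) - d xp) / a)"
      using a by (simp add: pos_le_divide_eq mult.commute)
  qed
  have "\<phi> y - \<phi> xp - M * bregman d gd xp y = G x \<bullet> w - M * (gd x \<bullet> w) + h y - h xp + M * (gd xp \<bullet> w)"
    unfolding \<phi>_def bregman_def w_def by (simp add: inner_diff_right algebra_simps)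
  with key have "\<phi> y \<ge> \<phi> xp + M * bregman d gd xp y" by linarith
  thus ?thesis unfolding \<phi>_def .
qed

theorem theorem1:
  fixes N :: "real^'n \<Rightarrow> real" and d :: "real^'n \<Rightarrow> real" and gd :: "real^'n \<Rightarrow> real^'n"
    and g :: "nat \<Rightarrow> real^'n \<Rightarrow> real" and G :: "nat \<Rightarrow> real^'n \<Rightarrow> real^'n"
    and h :: "real^'n \<Rightarrow> real" and v Mv L0 eps :: real and T :: nat
    and x0 xs :: "real^'n" and x :: "nat \<Rightarrow> real^'n" and L :: "nat \<Rightarrow> real" and i :: "nat \<Rightarrow> nat"
  assumes norm: "is_norm N"
    and prox: "prox_function N d gd"
    and v: "0 \<le> v" "v \<le> 1"
    and Mv: "Mv > 0"
    and g_convex: "\<And>t. t \<le> T \<Longrightarrow> convex_on UNIV (g t)"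
    and G_subgrad: "\<And>t y. t \<le> T \<Longrightarrow> is_subgradient (g t) y (G t y)"
    and holder: "\<And>t. t \<le> T \<Longrightarrow> \<exists>Mg. 0 \<le> Mg \<and> Mg < Mv \<and>
                   (\<forall>y z. dual_norm N (G t y - G t z) \<le> Mg * N (y - z) powr v)"
    and h_convex: "convex_on UNIV h"
    and xs_opt: "\<And>y. (\<Sum>t\<le>T. g t xs) / real (T + 1) + h xs \<le> (\<Sum>t\<le>T. g t y) / real (T + 1) + h y"
    and L0: "L0 > 0" and eps: "eps > 0"
    and alg: "oupgm d gd h g G L0 eps x0 T x L i"
  shows "(\<Sum>t\<le>T. (1 / L (Suc t)) * ((g t (x (Suc t)) + h (x (Suc t))) - (g t xs + h xs)))
           \<le> eps / 2 * (\<Sum>t\<in>{1..T+1}. 1 / L t) + 2 * bregman d gd x0 xs"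
proof -
  let ?r = "\<lambda>t. bregman d gd (x t) xs"
  let ?f = "\<lambda>t y. g t y + h y"
  have A: "\<And>t. t \<le> T \<Longrightarrow> ls_ok d gd h (g t) (G t) eps (L t) (x t) (i t) \<and>
        x (Suc t) = bregman_map d gd h (g t) (G t) (2 ^ i t * L t) (x t) \<and>
        L (Suc t) = 2 ^ i t * L t / 2" and x0: "x 0 = x0" and L0eq: "L 0 = L0"
    using alg unfolding oupgm_def by blast+
  have Lpos: "t \<le> Suc T \<Longrightarrow> L t > 0" for t
  proof (induction t)
    case 0 then show ?case using L0 L0eq by simp
  next
    case (Suc t)
    hence "0 < (2::real) ^ i t * L t / 2" "t \<le> T" by simp_all
    thus ?case using A[of t] by metis
  qed
  have step: "(1 / L (Suc t)) * (?f t (x (Suc t)) - ?f t xs) \<le> 2 * (?r t - ?r (Suc t)) + eps / 2 * (1 / L (Suc t))"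
    if t: "t \<le> T" for t
  proof -
    define M where "M = 2 ^ i t * L t"
    define xp where "xp = x (Suc t)"
    have LS: "L (Suc t) = M / 2" and Mpos: "M > 0" using A[OF t] Lpos[of t] t unfolding M_def by auto
    have xpd: "xp = bregman_map d gd h (g t) (G t) M (x t)" using A[OF t] unfolding M_def xp_def by blast
    have ls: "g t xp + h xp \<le> g t (x t) + G t (x t) \<bullet> (xp - x t) + M * bregman d gd (x t) xp + h xp + eps / 2"
      using A[OF t] xpd unfolding ls_ok_def Let_def M_def by simp
    have tp: "g t (x t) + G t (x t) \<bullet> (xs - x t) + M * bregman d gd (x t) xs + h xs \<ge>
         g t (x t) + G t (x t) \<bullet> (xp - x t) + M * bregman d gd (x t) xp + h xp + M * bregman d gd xp xs"
      by (rule three_point[OF norm prox h_convex Mpos xpd])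
    have sg: "g t (x t) + G t (x t) \<bullet> (xs - x t) \<le> g t xs"
      using G_subgrad[OF t, of "x t"] unfolding is_subgradient_def by blast
    have "?f t xp - ?f t xs \<le> M * (?r t - bregman d gd xp xs) + eps / 2"
      using ls tp sg by (simp add: algebra_simps)
    hence "?f t xp - ?f t xs \<le> 2 * L (Suc t) * (?r t - ?r (Suc t)) + eps / 2"
      unfolding LS xp_def by simp
    hence "(1 / L (Suc t)) * (?f t xp - ?f t xs) \<le> (1 / L (Suc t)) * (2 * L (Suc t) * (?r t - ?r (Suc t)) + eps / 2)"
      using Lpos[of "Suc t"] t by (intro mult_left_mono) auto
    also have "\<dots> = 2 * (?r t - ?r (Suc t)) + eps / 2 * (1 / L (Suc t))"
      using Lpos[of "Suc t"] t by (simp add: field_simps)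
    finally show ?thesis unfolding xp_def .
  qed
  have "(\<Sum>t\<le>T. (1 / L (Suc t)) * (?f t (x (Suc t)) - ?f t xs))
      \<le> (\<Sum>t\<le>T. 2 * (?r t - ?r (Suc t)) + eps / 2 * (1 / L (Suc t)))"
    by (rule sum_mono) (use step in auto)
  also have "\<dots> = 2 * (\<Sum>t\<le>T. ?r t - ?r (Suc t)) + eps / 2 * (\<Sum>t\<le>T. 1 / L (Suc t))"
    by (simp add: sum.distrib sum_distrib_left)
  also have "(\<Sum>t\<le>T. ?r t - ?r (Suc t)) = ?r 0 - ?r (Suc T)"
    by (induction T) auto
  also have "(\<Sum>t\<le>T. 1 / L (Suc t)) = (\<Sum>t\<in>{1..T+1}. 1 / L t)"
    using sum.shift_bounds_cl_Suc_ivl[of "\<lambda>t. 1 / L t" 0 T] by (simp add: atMost_atLeast0)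
  finally show ?thesis using bregman_nonneg[OF prox, of "x (Suc T)" xs] x0 by simp
qed

end
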